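(* Let $H=\sum_{\mathbf{j}\in V}h_{\mathbf{j}}$ be a Hamiltonian whose frustration graph $G$ is claw-free and contains a simplicial clique $K_s$, and let $\chi$ be a simplicial mode with respect to $K_s$. Then \[ T_G(u)\Big(1+u\sum_{\mathbf{j}\in K_s}h_{\mathbf{j}}\Big)\chi\,T_G(-u)=Z_G(-u^2)\Big(1-u\sum_{\mathbf{j}\in K_s}h_{\mathbf{j}}\Big)\chi . \]
   Context: Setting: $V$ a finite set of distinct $n$-qubit Pauli strings, $H=\sum_{\mathbf{j}\in V}h_{\mathbf{j}}$ with $h_{\mathbf{j}}=b_{\mathbf{j}}\sigma^{\mathbf{j}}$, $b_{\mathbf{j}}\in\mathbb{R}\setminus\{0\}$; frustration graph $G$: edge iff terms anticommute; claw-free: no induced $K_{1,3}$. Simplicial clique: clique $K_s$ with $\Gamma(\mathbf{j})\setminus K_s$ a clique for every $\mathbf{j}\in K_s$. Simplicial mode: Pauli operator $\chi=\sigma^{\mathbf{j}^*}$, $\mathbf{j}^*\notin V$, anticommuting with $h_{\mathbf{k}}$ iff $\mathbf{k}\in K_s$. For an independent set $S$, $h_S=\prod_{\mathbf{j}\in S}h_{\mathbf{j}}$; $T_G(u)=\sum_S(-u)^{|S|}h_S$ over all independent sets of $G$; $Z_G(-u^2)=T_G(u)T_G(-u)$. *)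

theory Defs
  imports "Jordan_Normal_Form.Matrix" "HOL-Library.List_Lexorder"
begin

text \<open>Single-qubit Pauli matrices, coded 0 = I, 1 = X, 2 = Y, 3 = Z.
  Row/column index False = |0>, True = |1>.\<close>
definition pauli1 :: "nat \<Rightarrow> bool \<Rightarrow> bool \<Rightarrow> complex" where
  "pauli1 a r c =
     (if a = 0 then (if r = c then 1 else 0)
      else if a = 1 then (if r \<noteq> c then 1 else 0)
      else if a = 2 then (if r = c then 0 else if r then \<i> else - \<i>)
      else (if r \<noteq> c then 0 else if r then -1 else 1))"

definition is_pauli_string :: "nat \<Rightarrow> nat list \<Rightarrow> bool" where
  "is_pauli_string n p \<longleftrightarrow> length p = n \<and> (\<forall>a\<in>set p. a < 4)"

text \<open>The operator sigma^p = tensor product of the single-qubit Paulis (qubit k acts on bit k).\<close>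
definition pauli_mat :: "nat list \<Rightarrow> complex mat" where
  "pauli_mat p = mat (2 ^ length p) (2 ^ length p)
     (\<lambda>(r, c). \<Prod>k<length p. pauli1 (p ! k) (bit r k) (bit c k))"

definition hterm :: "(nat list \<Rightarrow> real) \<Rightarrow> nat list \<Rightarrow> complex mat" where
  "hterm b j = complex_of_real (b j) \<cdot>\<^sub>m pauli_mat j"

definition anticommute :: "complex mat \<Rightarrow> complex mat \<Rightarrow> bool" where
  "anticommute A B \<longleftrightarrow> A * B = (-1) \<cdot>\<^sub>m (B * A)"

definition frust :: "(nat list \<Rightarrow> real) \<Rightarrow> nat list \<Rightarrow> nat list \<Rightarrow> bool" where
  "frust b j k \<longleftrightarrow> anticommute (hterm b j) (hterm b k)"

definition is_clique :: "('a \<Rightarrow> 'a \<Rightarrow> bool) \<Rightarrow> 'a set \<Rightarrow> bool" where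
  "is_clique adj K \<longleftrightarrow> (\<forall>x\<in>K. \<forall>y\<in>K. x \<noteq> y \<longrightarrow> adj x y)"

definition is_indep :: "('a \<Rightarrow> 'a \<Rightarrow> bool) \<Rightarrow> 'a set \<Rightarrow> bool" where
  "is_indep adj S \<longleftrightarrow> (\<forall>x\<in>S. \<forall>y\<in>S. x \<noteq> y \<longrightarrow> \<not> adj x y)"

definition claw_free :: "'a set \<Rightarrow> ('a \<Rightarrow> 'a \<Rightarrow> bool) \<Rightarrow> bool" where
  "claw_free V adj \<longleftrightarrow>
     \<not> (\<exists>a\<in>V. \<exists>x\<in>V. \<exists>y\<in>V. \<exists>z\<in>V.
          a \<noteq> x \<and> a \<noteq> y \<and> a \<noteq> z \<and> x \<noteq> y \<and> x \<noteq> z \<and> y \<noteq> z \<and>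
          adj a x \<and> adj a y \<and> adj a z \<and>
          \<not> adj x y \<and> \<not> adj x z \<and> \<not> adj y z)"

definition nbhd :: "'a set \<Rightarrow> ('a \<Rightarrow> 'a \<Rightarrow> bool) \<Rightarrow> 'a \<Rightarrow> 'a set" where
  "nbhd V adj j = {k \<in> V. k \<noteq> j \<and> adj j k}"

definition simplicial_clique :: "'a set \<Rightarrow> ('a \<Rightarrow> 'a \<Rightarrow> bool) \<Rightarrow> 'a set \<Rightarrow> bool" where
  "simplicial_clique V adj K \<longleftrightarrow>
     K \<subseteq> V \<and> K \<noteq> {} \<and> is_clique adj K \<and> (\<forall>j\<in>K. is_clique adj (nbhd V adj j - K))"

definition msum :: "nat \<Rightarrow> ('b \<Rightarrow> complex mat) \<Rightarrow> 'b set \<Rightarrow> complex mat" where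
  "msum N f A = mat N N (\<lambda>(r, c). \<Sum>x\<in>A. f x $$ (r, c))"

definition mprod :: "nat \<Rightarrow> complex mat list \<Rightarrow> complex mat" where
  "mprod N ms = foldr (*) ms (1\<^sub>m N)"

text \<open>h_S for an independent set S (its terms commute, so the order is immaterial).\<close>
definition hS :: "nat \<Rightarrow> (nat list \<Rightarrow> real) \<Rightarrow> nat list set \<Rightarrow> complex mat" where
  "hS n b S = mprod (2 ^ n) (map (hterm b) (sorted_list_of_set S))"

definition TG :: "nat \<Rightarrow> nat list set \<Rightarrow> (nat list \<Rightarrow> real) \<Rightarrow> complex \<Rightarrow> complex mat" where
  "TG n V b u = msum (2 ^ n) (\<lambda>S. (- u) ^ card S \<cdot>\<^sub>m hS n b S) {S. S \<subseteq> V \<and> is_indep (frust b) S}"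

text \<open>Z_G(-u^2) := T_G(u) T_G(-u); the argument u is what we pass.\<close>
definition ZG_neg_sq :: "nat \<Rightarrow> nat list set \<Rightarrow> (nat list \<Rightarrow> real) \<Rightarrow> complex \<Rightarrow> complex mat" where
  "ZG_neg_sq n V b u = TG n V b u * TG n V b (- u)"

end

theory Submission
  imports Defs
begin
lemma mult_entry: "A \<in> carrier_mat n m \<Longrightarrow> B \<in> carrier_mat m k \<Longrightarrow> i < n \<Longrightarrow> j < k \<Longrightarrow> (A * B) $$ (i,j) = (\<Sum>l<m. A $$ (i,l) * B $$ (l,j))"
  by (auto simp: scalar_prod_def intro!: sum.cong)

lemma pauli_carrier: "pauli_mat p \<in> carrier_mat (2 ^ length p) (2 ^ length p)"
  by (simp add: pauli_mat_def)

lemma pauli_Cons_entry: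
  assumes "r < 2 ^ Suc (length p)" "c < 2 ^ Suc (length p)"
  shows "pauli_mat (a # p) $$ (r, c) = pauli1 a (odd r) (odd c) * pauli_mat p $$ (r div 2, c div 2)"
proof -
  have "r div 2 < 2 ^ length p" "c div 2 < 2 ^ length p" using assms by auto
  then show ?thesis using assms
    by (simp add: pauli_mat_def prod.lessThan_Suc_shift bit_Suc bit_0 del: prod.lessThan_Suc)
qed

lemma sum_double: "(\<Sum>m<2 * (M::nat). g m) = (\<Sum>m<M. g (2 * m) + g (2 * m + 1))"
  by (induction M) (auto simp: sum.distrib add_ac)

lemma pauli_prod_Cons_entry:
  assumes "length q = length p" "r < 2 ^ Suc (length p)" "c < 2 ^ Suc (length p)"
  shows "(pauli_mat (a # p) * pauli_mat (a' # q)) $$ (r, c) =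
     (pauli1 a (odd r) False * pauli1 a' False (odd c) + pauli1 a (odd r) True * pauli1 a' True (odd c))
     * (pauli_mat p * pauli_mat q) $$ (r div 2, c div 2)"
proof -
  let ?L = "length p"
  have rc: "r div 2 < 2 ^ ?L" "c div 2 < 2 ^ ?L" using assms by auto
  have "(pauli_mat (a # p) * pauli_mat (a' # q)) $$ (r, c) =
     (\<Sum>m<2 * 2 ^ ?L. pauli_mat (a # p) $$ (r, m) * pauli_mat (a' # q) $$ (m, c))"
    by (rule mult_entry) (use assms pauli_carrier[of "a#p"] pauli_carrier[of "a'#q"] in auto)
  also have "\<dots> = (\<Sum>m<2 ^ ?L. pauli_mat (a # p) $$ (r, 2*m) * pauli_mat (a' # q) $$ (2*m, c)
       + pauli_mat (a # p) $$ (r, 2*m+1) * pauli_mat (a' # q) $$ (2*m+1, c))"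
    by (rule sum_double)
  also have "\<dots> = (\<Sum>m<2 ^ ?L. (pauli1 a (odd r) False * pauli1 a' False (odd c) + pauli1 a (odd r) True * pauli1 a' True (odd c))
       * (pauli_mat p $$ (r div 2, m) * pauli_mat q $$ (m, c div 2)))"
    apply (rule sum.cong, simp)
    using assms by (simp add: pauli_Cons_entry algebra_simps)
  also have "\<dots> = (pauli1 a (odd r) False * pauli1 a' False (odd c) + pauli1 a (odd r) True * pauli1 a' True (odd c))
     * (pauli_mat p * pauli_mat q) $$ (r div 2, c div 2)"
    using rc assms pauli_carrier[of p] pauli_carrier[of q]
    by (subst mult_entry[where m="2^length p"]) (auto simp: sum_distrib_left)
  finally show ?thesis .
qed

lemma pauli1_comm:
  assumes "a < 4" "a' < 4"
  shows "\<exists>s::complex. (s = 1 \<or> s = -1) \<and> (\<forall>x y.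
    pauli1 a x False * pauli1 a' False y + pauli1 a x True * pauli1 a' True y
    = s * (pauli1 a' x False * pauli1 a False y + pauli1 a' x True * pauli1 a True y))"
proof -
  have "a = 0 \<or> a = 1 \<or> a = 2 \<or> a = 3" "a' = 0 \<or> a' = 1 \<or> a' = 2 \<or> a' = 3" using assms by auto
  then show ?thesis
    by (elim disjE) (auto simp: pauli1_def)
qed

lemma pauli_comm_anti:
  assumes "length q = length p" "\<forall>a\<in>set p. a < 4" "\<forall>a\<in>set q. a < 4"
  shows "\<exists>s::complex. (s = 1 \<or> s = -1) \<and> pauli_mat p * pauli_mat q = s \<cdot>\<^sub>m (pauli_mat q * pauli_mat p)"
  using assms
proof (induction p arbitrary: q)
  case Nil
  then show ?case by (intro exI[of _ 1]) (auto simp: pauli_mat_def)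
next
  case (Cons a p q0)
  then obtain a' q where q0: "q0 = a' # q" and lq: "length q = length p"
    by (cases q0) auto
  have "\<exists>s1::complex. (s1 = 1 \<or> s1 = -1) \<and> pauli_mat p * pauli_mat q = s1 \<cdot>\<^sub>m (pauli_mat q * pauli_mat p)"
    using Cons.IH[of q] Cons.prems q0 lq by simp
  then obtain s1 where s1: "s1 = 1 \<or> s1 = -1" "pauli_mat p * pauli_mat q = s1 \<cdot>\<^sub>m (pauli_mat q * pauli_mat p)"
    by blast
  from Cons q0 obtain s2 where s2: "s2 = (1::complex) \<or> s2 = -1" "\<forall>x y.
    pauli1 a x False * pauli1 a' False y + pauli1 a x True * pauli1 a' True y
    = s2 * (pauli1 a' x False * pauli1 a False y + pauli1 a' x True * pauli1 a True y)"
    using pauli1_comm[of a a'] by auto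
  show ?case
  proof (intro exI[of _ "s2 * s1"] conjI)
    show "s2 * s1 = 1 \<or> s2 * s1 = -1" using s1 s2 by auto
    show "pauli_mat (a # p) * pauli_mat q0 = (s2 * s1) \<cdot>\<^sub>m (pauli_mat q0 * pauli_mat (a # p))"
    proof (rule eq_matI)
      fix r c assume r: "r < dim_row ((s2 * s1) \<cdot>\<^sub>m (pauli_mat q0 * pauli_mat (a # p)))"
        and c: "c < dim_col ((s2 * s1) \<cdot>\<^sub>m (pauli_mat q0 * pauli_mat (a # p)))"
      have r': "r < 2 ^ Suc (length p)" and c': "c < 2 ^ Suc (length p)"
        using r c q0 lq by (auto simp: pauli_mat_def)
      have rc: "r div 2 < 2 ^ length p" "c div 2 < 2 ^ length p" using r' c' by auto
      have e: "(pauli_mat p * pauli_mat q) $$ (r div 2, c div 2) = s1 * (pauli_mat q * pauli_mat p) $$ (r div 2, c div 2)"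
        using s1(2) rc lq by (simp add: pauli_mat_def)
      have d: "pauli_mat (a' # q) * pauli_mat (a # p) \<in> carrier_mat (2 ^ Suc (length p)) (2 ^ Suc (length p))"
        using lq pauli_carrier[of "a'#q"] pauli_carrier[of "a#p"] by simp
      have "(pauli_mat (a # p) * pauli_mat q0) $$ (r, c) =
        (pauli1 a (odd r) False * pauli1 a' False (odd c) + pauli1 a (odd r) True * pauli1 a' True (odd c))
     * (pauli_mat p * pauli_mat q) $$ (r div 2, c div 2)"
        unfolding q0 by (rule pauli_prod_Cons_entry) (use r' c' lq in auto)
      also have "\<dots> = s2 * s1 * ((pauli1 a' (odd r) False * pauli1 a False (odd c) + pauli1 a' (odd r) True * pauli1 a True (odd c))
     * (pauli_mat q * pauli_mat p) $$ (r div 2, c div 2))"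
        using s2(2) e by simp
      also have "\<dots> = s2 * s1 * (pauli_mat q0 * pauli_mat (a # p)) $$ (r, c)"
        unfolding q0 by (subst pauli_prod_Cons_entry) (use r' c' lq in auto)
      also have "\<dots> = ((s2 * s1) \<cdot>\<^sub>m (pauli_mat q0 * pauli_mat (a # p))) $$ (r, c)"
        unfolding q0 by (rule index_smult_mat(1)[symmetric]) (use d r' c' in \<open>auto dest: carrier_matD\<close>)
      finally show "(pauli_mat (a # p) * pauli_mat q0) $$ (r, c) = ((s2 * s1) \<cdot>\<^sub>m (pauli_mat q0 * pauli_mat (a # p))) $$ (r, c)" .
    next
      show "dim_row (pauli_mat (a # p) * pauli_mat q0) = dim_row ((s2 * s1) \<cdot>\<^sub>m (pauli_mat q0 * pauli_mat (a # p)))"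
        using q0 lq by (simp add: pauli_mat_def)
      show "dim_col (pauli_mat (a # p) * pauli_mat q0) = dim_col ((s2 * s1) \<cdot>\<^sub>m (pauli_mat q0 * pauli_mat (a # p)))"
        using q0 lq by (simp add: pauli_mat_def)
    qed
  qed
qed

lemma msum_carrier[simp]: "msum N f A \<in> carrier_mat N N"
  by (simp add: msum_def)

lemma msum_dim[simp]: "dim_row (msum N f A) = N" "dim_col (msum N f A) = N"
  by (simp_all add: msum_def)

lemma msum_entry: "i < N \<Longrightarrow> j < N \<Longrightarrow> msum N f A $$ (i, j) = (\<Sum>x\<in>A. f x $$ (i, j))"
  by (simp add: msum_def)

lemma msum_cong: "(\<And>x. x \<in> A \<Longrightarrow> f x = g x) \<Longrightarrow> msum N f A = msum N g A"
  by (simp add: msum_def)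

lemma msum_add:
  assumes "\<And>x. x \<in> A \<Longrightarrow> f x \<in> carrier_mat N N" "\<And>x. x \<in> A \<Longrightarrow> g x \<in> carrier_mat N N"
  shows "msum N (\<lambda>x. f x + g x) A = msum N f A + msum N g A"
  using assms[THEN carrier_matD(1)] assms[THEN carrier_matD(2)] by (intro eq_matI) (auto simp: msum_entry sum.distrib intro!: sum.cong)

lemma msum_smult:
  assumes "\<And>x. x \<in> A \<Longrightarrow> f x \<in> carrier_mat N N"
  shows "msum N (\<lambda>x. c \<cdot>\<^sub>m f x) A = c \<cdot>\<^sub>m msum N f A"
  using assms[THEN carrier_matD(1)] assms[THEN carrier_matD(2)] by (intro eq_matI) (auto simp: msum_entry sum_distrib_left intro!: sum.cong)

lemma msum_mult_left:
  assumes "M \<in> carrier_mat N N" "\<And>x. x \<in> A \<Longrightarrow> f x \<in> carrier_mat N N"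
  shows "msum N (\<lambda>x. M * f x) A = M * msum N f A"
proof (rule eq_matI)
  fix i j assume "i < dim_row (M * msum N f A)" "j < dim_col (M * msum N f A)"
  then have ij: "i < N" "j < N" using assms by auto
  have "msum N (\<lambda>x. M * f x) A $$ (i, j) = (\<Sum>x\<in>A. \<Sum>l<N. M $$ (i, l) * f x $$ (l, j))"
    using ij assms by (auto simp: msum_entry simp del: index_mult_mat intro!: sum.cong mult_entry)
  also have "\<dots> = (\<Sum>l<N. M $$ (i, l) * (\<Sum>x\<in>A. f x $$ (l, j)))"
    by (subst sum.swap) (simp add: sum_distrib_left)
  also have "\<dots> = (M * msum N f A) $$ (i, j)"
    using ij assms by (subst mult_entry[of _ N N]) (auto simp: msum_entry intro!: sum.cong)
  finally show "msum N (\<lambda>x. M * f x) A $$ (i, j) = (M * msum N f A) $$ (i, j)" .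
qed (use assms in auto)

lemma msum_mult_right:
  assumes "M \<in> carrier_mat N N" "\<And>x. x \<in> A \<Longrightarrow> f x \<in> carrier_mat N N"
  shows "msum N (\<lambda>x. f x * M) A = msum N f A * M"
proof (rule eq_matI)
  fix i j assume "i < dim_row (msum N f A * M)" "j < dim_col (msum N f A * M)"
  then have ij: "i < N" "j < N" using assms by auto
  have "msum N (\<lambda>x. f x * M) A $$ (i, j) = (\<Sum>x\<in>A. \<Sum>l<N. f x $$ (i, l) * M $$ (l, j))"
    using ij assms by (auto simp: msum_entry simp del: index_mult_mat intro!: sum.cong mult_entry)
  also have "\<dots> = (\<Sum>l<N. (\<Sum>x\<in>A. f x $$ (i, l)) * M $$ (l, j))"
    by (subst sum.swap) (simp add: sum_distrib_right)
  also have "\<dots> = (msum N f A * M) $$ (i, j)"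
    using ij assms by (subst mult_entry[of _ N N]) (auto simp: msum_entry intro!: sum.cong)
  finally show "msum N (\<lambda>x. f x * M) A $$ (i, j) = (msum N f A * M) $$ (i, j)" .
qed (use assms in auto)

lemma msum_union:
  assumes "finite A" "finite B" "A \<inter> B = {}"
  shows "msum N f (A \<union> B) = msum N f A + msum N f B"
  using assms by (intro eq_matI) (auto simp: msum_entry sum.union_disjoint)

lemma msum_UN:
  assumes "finite K" "\<And>k. k \<in> K \<Longrightarrow> finite (I k)"
    "\<And>k k'. k \<in> K \<Longrightarrow> k' \<in> K \<Longrightarrow> k \<noteq> k' \<Longrightarrow> I k \<inter> I k' = {}"
  shows "msum N f (\<Union>k\<in>K. I k) = msum N (\<lambda>k. msum N f (I k)) K"
  using assms by (intro eq_matI) (auto simp: msum_entry sum.UNION_disjoint intro!: sum.cong)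

lemma msum_image:
  assumes "inj_on g A"
  shows "msum N f (g ` A) = msum N (\<lambda>x. f (g x)) A"
  using assms by (intro eq_matI) (auto simp: msum_entry sum.reindex)

lemma msum_zero:
  assumes "\<And>x. x \<in> A \<Longrightarrow> f x = 0\<^sub>m N N"
  shows "msum N f A = 0\<^sub>m N N"
  using assms by (intro eq_matI) (auto simp: msum_entry)

lemma msum_if_subset:
  assumes "finite A" "B \<subseteq> A"
  shows "msum N (\<lambda>x. if x \<in> B then f x else 0\<^sub>m N N) A = msum N f B"
proof (rule eq_matI)
  fix i j assume "i < dim_row (msum N f B)" "j < dim_col (msum N f B)"
  then have ij: "i < N" "j < N" by auto
  have "(\<Sum>x\<in>A. (if x \<in> B then f x else 0\<^sub>m N N) $$ (i, j)) = (\<Sum>x\<in>A. if x \<in> B then f x $$ (i, j) else 0)"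
    using ij by (intro sum.cong) auto
  also have "\<dots> = (\<Sum>x\<in>B. f x $$ (i, j))"
    using assms by (simp add: sum.If_cases Int_absorb1)
  finally show "msum N (\<lambda>x. if x \<in> B then f x else 0\<^sub>m N N) A $$ (i, j) = msum N f B $$ (i, j)"
    using ij by (simp add: msum_entry)
qed auto


lemma msum_uminus:
  assumes "\<And>x. x \<in> A \<Longrightarrow> f x \<in> carrier_mat N N"
  shows "msum N (\<lambda>x. - f x) A = - msum N f A"
  using assms[THEN carrier_matD(1)] assms[THEN carrier_matD(2)] 
  by (intro eq_matI) (auto simp: msum_entry sum_negf intro!: sum.cong)

lemma msum_diff:
  assumes "\<And>x. x \<in> A \<Longrightarrow> f x \<in> carrier_mat N N" "\<And>x. x \<in> A \<Longrightarrow> g x \<in> carrier_mat N N"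
  shows "msum N (\<lambda>x. f x - g x) A = msum N f A - msum N g A"
  using assms[THEN carrier_matD(1)] assms[THEN carrier_matD(2)] 
  by (intro eq_matI) (auto simp: msum_entry sum_subtractf intro!: sum.cong)

context fixes N :: nat
begin

lemma dl: "A \<in> carrier_mat N N \<Longrightarrow> B \<in> carrier_mat N N \<Longrightarrow> C \<in> carrier_mat N N \<Longrightarrow> A * (B + C) = A * B + A * C"
  by (rule mult_add_distrib_mat) auto
lemma dr: "A \<in> carrier_mat N N \<Longrightarrow> B \<in> carrier_mat N N \<Longrightarrow> C \<in> carrier_mat N N \<Longrightarrow> (A + B) * C = A * C + B * C"
  by (rule add_mult_distrib_mat) auto
lemma dlm: "A \<in> carrier_mat N N \<Longrightarrow> B \<in> carrier_mat N N \<Longrightarrow> C \<in> carrier_mat N N \<Longrightarrow> A * (B - C) = A * B - A * (C :: complex mat)"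
  by (rule mult_minus_distrib_mat) auto
lemma drm: "A \<in> carrier_mat N N \<Longrightarrow> B \<in> carrier_mat N N \<Longrightarrow> C \<in> carrier_mat N N \<Longrightarrow> (A - B) * C = A * C - B * (C :: complex mat)"
  by (rule minus_mult_distrib_mat) auto
lemma sl: "A \<in> carrier_mat N N \<Longrightarrow> B \<in> carrier_mat N N \<Longrightarrow> (k \<cdot>\<^sub>m A) * B = (k::complex) \<cdot>\<^sub>m (A * B)"
  by (rule mult_smult_assoc_mat) auto
lemma sr: "A \<in> carrier_mat N N \<Longrightarrow> B \<in> carrier_mat N N \<Longrightarrow> A * (k \<cdot>\<^sub>m B) = (k::complex) \<cdot>\<^sub>m (A * B)"
  by (rule mult_smult_distrib) auto
lemma as: "A \<in> carrier_mat N N \<Longrightarrow> B \<in> carrier_mat N N \<Longrightarrow> C \<in> carrier_mat N N \<Longrightarrow> A * B * C = A * (B * (C :: complex mat))"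
  by (rule assoc_mult_mat) auto

lemma su: "A \<in> carrier_mat N N \<Longrightarrow> k \<cdot>\<^sub>m (- A) = - ((k::complex) \<cdot>\<^sub>m A)"
  by (rule eq_matI) auto

lemma mc: "A \<in> carrier_mat N N \<Longrightarrow> B \<in> carrier_mat N N \<Longrightarrow> A * B \<in> carrier_mat N N"
  by simp

lemmas malg = dl dr dlm drm sl sr

lemma final_alg:
  fixes A Bs hK X Tu T :: "complex mat"
  assumes car: "A \<in> carrier_mat N N" "Bs \<in> carrier_mat N N" "hK \<in> carrier_mat N N" "X \<in> carrier_mat N N" "Tu \<in> carrier_mat N N"
    and T: "T = A + u \<cdot>\<^sub>m Bs" and XA: "X * A = A * X" and XB: "X * Bs = - (Bs * X)"
    and E1: "hK * A + A * hK = 2 \<cdot>\<^sub>m Bs" and E2: "hK * Bs = Bs * hK"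
  shows "Tu * (1\<^sub>m N + u \<cdot>\<^sub>m hK) * X * T = Tu * T * (1\<^sub>m N - u \<cdot>\<^sub>m hK) * X"
proof -
  have s1: "X * T = (A - u \<cdot>\<^sub>m Bs) * X"
    unfolding T using car XA XB by (simp add: malg su minus_add_uminus_mat[of _ N N])
  have s2: "(1\<^sub>m N + u \<cdot>\<^sub>m hK) * (A - u \<cdot>\<^sub>m Bs) = T * (1\<^sub>m N - u \<cdot>\<^sub>m hK)"
  proof -
    have l: "(1\<^sub>m N + u \<cdot>\<^sub>m hK) * (A - u \<cdot>\<^sub>m Bs) = A - u \<cdot>\<^sub>m Bs + u \<cdot>\<^sub>m (hK * A) - (u * u) \<cdot>\<^sub>m (hK * Bs)"
      using car apply (simp add: malg)
      apply (rule eq_matI)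
      apply (auto simp: algebra_simps car[THEN carrier_matD(1)] car[THEN carrier_matD(2)])
      done
    have r: "T * (1\<^sub>m N - u \<cdot>\<^sub>m hK) = A - u \<cdot>\<^sub>m (A * hK) + u \<cdot>\<^sub>m Bs - (u * u) \<cdot>\<^sub>m (Bs * hK)"
      unfolding T using car apply (simp add: malg)
      apply (rule eq_matI)
      apply (auto simp: algebra_simps car[THEN carrier_matD(1)] car[THEN carrier_matD(2)])
      done
    show ?thesis unfolding l r
    proof (rule eq_matI)
      fix i j assume ij: "i < dim_row (A - u \<cdot>\<^sub>m (A * hK) + u \<cdot>\<^sub>m Bs - (u * u) \<cdot>\<^sub>m (Bs * hK))"
         "j < dim_col (A - u \<cdot>\<^sub>m (A * hK) + u \<cdot>\<^sub>m Bs - (u * u) \<cdot>\<^sub>m (Bs * hK))"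
      then have ij: "i < N" "j < N" using car by auto
      have e1: "(hK * A) $$ (i,j) = 2 * Bs $$ (i,j) - (A * hK) $$ (i,j)"
        using arg_cong[OF E1, of "\<lambda>M. M $$ (i,j)"] ij car by (simp add: eq_diff_eq)
      have e2: "(hK * Bs) $$ (i,j) = (Bs * hK) $$ (i,j)"
        using arg_cong[OF E2, of "\<lambda>M. M $$ (i,j)"] by simp
      show "(A - u \<cdot>\<^sub>m Bs + u \<cdot>\<^sub>m (hK * A) - (u * u) \<cdot>\<^sub>m (hK * Bs)) $$ (i, j) =
         (A - u \<cdot>\<^sub>m (A * hK) + u \<cdot>\<^sub>m Bs - (u * u) \<cdot>\<^sub>m (Bs * hK)) $$ (i, j)"
        using ij car e1 e2 apply (simp add: algebra_simps) by (metis distrib_left)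
    qed (use car in auto)
  qed
  have Tc: "T \<in> carrier_mat N N" using T car by simp
  have "Tu * (1\<^sub>m N + u \<cdot>\<^sub>m hK) * X * T = Tu * ((1\<^sub>m N + u \<cdot>\<^sub>m hK) * (X * T))"
    using car Tc by (simp add: as mc)
  also have "\<dots> = Tu * (((1\<^sub>m N + u \<cdot>\<^sub>m hK) * (A - u \<cdot>\<^sub>m Bs)) * X)"
    using car by (simp add: s1 as mc minus_carrier_mat)
  also have "\<dots> = Tu * T * (1\<^sub>m N - u \<cdot>\<^sub>m hK) * X"
    using car Tc by (simp add: s2 as mc minus_carrier_mat)
  finally show ?thesis .
qed


lemma smult_neg: "A \<in> carrier_mat N N \<Longrightarrow> (- k) \<cdot>\<^sub>m A = - ((k::complex) \<cdot>\<^sub>m A)"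
  by (rule eq_matI) auto

lemma neg_mult_l: "A \<in> carrier_mat N N \<Longrightarrow> B \<in> carrier_mat N N \<Longrightarrow> (- A) * B = - (A * (B::complex mat))"
  by simp

lemma sone: "1 \<cdot>\<^sub>m A = (A::complex mat)"
  by (rule eq_matI) auto

lemma mprod_carrier: "(\<forall>x\<in>set ms. x \<in> carrier_mat N N) \<Longrightarrow> mprod N ms \<in> carrier_mat N N"
  unfolding mprod_def by (induction ms) auto

lemma mprod_Cons: "mprod N (x # ms) = x * mprod N ms"
  by (simp add: mprod_def)

lemma mprod_sign:
  fixes M :: "complex mat"
  assumes M: "M \<in> carrier_mat N N" and hc: "\<forall>x\<in>set xs. h x \<in> carrier_mat N N"
    and anti: "\<forall>x\<in>set xs. P x \<longrightarrow> M * h x = - (h x * M)"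
    and com: "\<forall>x\<in>set xs. \<not> P x \<longrightarrow> M * h x = h x * M"
  shows "M * mprod N (map h xs) = (-1) ^ length (filter P xs) \<cdot>\<^sub>m (mprod N (map h xs) * M)"
  using hc anti com
proof (induction xs)
  case Nil
  then show ?case using M by (simp add: mprod_def sone)
next
  case (Cons x xs)
  let ?R = "mprod N (map h xs)"
  let ?s = "(-1::complex) ^ length (filter P xs)"
  have Rc: "?R \<in> carrier_mat N N" using Cons.prems by (intro mprod_carrier) auto
  have hx: "h x \<in> carrier_mat N N" using Cons.prems by auto
  have IH: "M * ?R = ?s \<cdot>\<^sub>m (?R * M)" using Cons by auto
  have "M * mprod N (map h (x # xs)) = (M * h x) * ?R"
    using M Rc hx by (simp add: mprod_Cons as)
  show ?case
  proof (cases "P x")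
    case True
    then have "M * h x = - (h x * M)" using Cons.prems by auto
    then have "M * mprod N (map h (x # xs)) = - (h x * (M * ?R))"
      using M Rc hx \<open>M * mprod N (map h (x # xs)) = (M * h x) * ?R\<close> by (simp add: as)
    also have "\<dots> = (- ?s) \<cdot>\<^sub>m (h x * ?R * M)"
      unfolding IH using M Rc hx by (simp add: sr as smult_neg)
    finally show ?thesis using True by (simp add: mprod_Cons)
  next
    case False
    then have "M * h x = h x * M" using Cons.prems by auto
    then have "M * mprod N (map h (x # xs)) = h x * (M * ?R)"
      using M Rc hx \<open>M * mprod N (map h (x # xs)) = (M * h x) * ?R\<close> by (simp add: as)
    also have "\<dots> = ?s \<cdot>\<^sub>m (h x * ?R * M)"
      unfolding IH using M Rc hx by (simp add: sr as)
    finally show ?thesis using False by (simp add: mprod_Cons)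
  qed
qed

lemma mprod_insort:
  fixes h :: "'a::linorder \<Rightarrow> complex mat"
  assumes hk: "h k \<in> carrier_mat N N" and hc: "\<forall>x\<in>set xs. h x \<in> carrier_mat N N \<and> h k * h x = h x * h k"
  shows "mprod N (map h (insort k xs)) = h k * mprod N (map h xs)"
  using hc
proof (induction xs)
  case Nil
  then show ?case by (simp add: mprod_def)
next
  case (Cons x xs)
  have Rc: "mprod N (map h xs) \<in> carrier_mat N N" using Cons.prems by (intro mprod_carrier) auto
  have hx: "h x \<in> carrier_mat N N" "h k * h x = h x * h k" using Cons.prems by auto
  show ?case
  proof (cases "k \<le> x")
    case True
    then show ?thesis by (simp add: mprod_Cons)
  next
    case False
    then have "mprod N (map h (insort k (x # xs))) = h x * (h k * mprod N (map h xs))"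
      using Cons by (simp add: mprod_Cons)
    also have "\<dots> = (h x * h k) * mprod N (map h xs)"
      by (intro as[symmetric] hx(1) hk Rc)
    also have "\<dots> = (h k * h x) * mprod N (map h xs)"
      using hx by simp
    also have "\<dots> = h k * (h x * mprod N (map h xs))"
      by (intro as hx(1) hk Rc)
    finally show ?thesis by (simp add: mprod_Cons)
  qed
qed
end


lemma neg_self0: assumes "(x::complex) = - x" shows "x = 0"
proof -
  have "x + x = x + - x" using assms by (rule arg_cong[where f = "\<lambda>y. x + y"])
  then have "x + x = 0" by (simp only: add.right_inverse)
  then have "2 * x = 0" by (simp only: mult_2)
  then show ?thesis by simp
qed

lemma smult_smult_mat: "a \<cdot>\<^sub>m (c \<cdot>\<^sub>m A) = (a * c :: complex) \<cdot>\<^sub>m A"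
  by (rule eq_matI) auto

lemma neg_smult_mat: "(-1 :: complex) \<cdot>\<^sub>m A = - A"
  by (rule eq_matI) auto

lemma uminus_uminus_mat': "- (- A) = (A :: complex mat)"
  by (rule eq_matI) auto

lemma two_smult: "A + A = (2::complex) \<cdot>\<^sub>m A"
  by (rule eq_matI) auto

locale LS =
  fixes n :: nat and V :: "nat list set" and b :: "nat list \<Rightarrow> real" and K :: "nat list set"
    and jstar :: "nat list" and u :: complex
  assumes finV: "finite V" and ps: "\<forall>j\<in>V. is_pauli_string n j"
    and sc: "simplicial_clique V (frust b) K" and pj: "is_pauli_string n jstar"
    and chiK: "\<forall>k\<in>V. anticommute (pauli_mat jstar) (hterm b k) \<longleftrightarrow> k \<in> K"
begin

abbreviation "NN \<equiv> (2::nat) ^ n"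
abbreviation "h \<equiv> hterm b"
abbreviation "chi \<equiv> pauli_mat jstar"
abbreviation "adj \<equiv> frust b"

lemmas asN = as[where N=NN] and slN = sl[where N=NN] and srN = sr[where N=NN] and mcN = mc[where N=NN]
  and suN = su[where N=NN] and dlN = dl[where N=NN] and drN = dr[where N=NN] and dlmN = dlm[where N=NN] and drmN = drm[where N=NN]

lemma KV: "K \<subseteq> V" and Kcl: "is_clique adj K" and finK: "finite K"
  using sc finV by (auto simp: simplicial_clique_def intro: finite_subset)

lemma pauli_car: "is_pauli_string n p \<Longrightarrow> pauli_mat p \<in> carrier_mat NN NN"
  using pauli_carrier[of p] by (simp add: is_pauli_string_def)

lemma h_car: "j \<in> V \<Longrightarrow> h j \<in> carrier_mat NN NN"
  using ps pauli_car by (simp add: hterm_def)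

lemma chi_car: "chi \<in> carrier_mat NN NN"
  using pj pauli_car by simp

lemma anti_iff: "A \<in> carrier_mat NN NN \<Longrightarrow> B \<in> carrier_mat NN NN \<Longrightarrow> anticommute A B \<longleftrightarrow> A * B = - (B * A)"
  by (simp add: anticommute_def neg_smult_mat)

lemma pauli_ca: "is_pauli_string n p \<Longrightarrow> is_pauli_string n q \<Longrightarrow>
   pauli_mat p * pauli_mat q = pauli_mat q * pauli_mat p \<or> pauli_mat p * pauli_mat q = - (pauli_mat q * pauli_mat p)"
  using pauli_comm_anti[of q p] by (auto simp: is_pauli_string_def sone neg_smult_mat)

lemma h_ca: assumes "j \<in> V" "k \<in> V"
  shows "h j * h k = h k * h j \<or> h j * h k = - (h k * h j)"
proof -
  have pc: "pauli_mat j \<in> carrier_mat NN NN" "pauli_mat k \<in> carrier_mat NN NN" using assms ps pauli_car by auto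
  have e1: "h j * h k = complex_of_real (b j * b k) \<cdot>\<^sub>m (pauli_mat j * pauli_mat k)"
    using pc by (simp add: hterm_def slN srN smult_smult_mat mult.commute)
  have e2: "h k * h j = complex_of_real (b j * b k) \<cdot>\<^sub>m (pauli_mat k * pauli_mat j)"
    using pc by (simp add: hterm_def slN srN smult_smult_mat mult.commute)
  show ?thesis using pauli_ca[of j k] assms ps pc unfolding e1 e2 by (auto simp: suN)
qed

lemma h_comm: "j \<in> V \<Longrightarrow> k \<in> V \<Longrightarrow> \<not> adj j k \<Longrightarrow> h j * h k = h k * h j"
  using h_ca[of j k] h_car anti_iff by (auto simp: frust_def)

lemma h_anti: "j \<in> V \<Longrightarrow> k \<in> V \<Longrightarrow> adj j k \<Longrightarrow> h j * h k = - (h k * h j)"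
  using h_car anti_iff by (auto simp: frust_def)

lemma adj_sym: "j \<in> V \<Longrightarrow> k \<in> V \<Longrightarrow> adj j k \<Longrightarrow> adj k j"
  using h_anti[of j k] h_car anti_iff[of "h k" "h j"] by (auto simp: frust_def uminus_uminus_mat')

lemma chi_ca: assumes "k \<in> V" shows "chi * h k = h k * chi \<or> chi * h k = - (h k * chi)"
proof -
  have pc: "pauli_mat k \<in> carrier_mat NN NN" using assms ps pauli_car by auto
  show ?thesis using pauli_ca[of jstar k] pj assms ps pc chi_car by (auto simp: hterm_def slN srN suN)
qed

lemma chi_comm: "k \<in> V \<Longrightarrow> k \<notin> K \<Longrightarrow> chi * h k = h k * chi"
  using chi_ca[of k] chiK h_car chi_car anti_iff by auto

lemma chi_anti: "k \<in> K \<Longrightarrow> chi * h k = - (h k * chi)"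
  using chiK h_car chi_car anti_iff KV by auto


lemma hS_car: "S \<subseteq> V \<Longrightarrow> finite S \<Longrightarrow> hS n b S \<in> carrier_mat NN NN"
  unfolding hS_def by (rule mprod_carrier) (auto intro: h_car)

lemma hS_insert:
  assumes "finite R" "R \<subseteq> V" "k \<in> V" "k \<notin> R" "\<forall>j\<in>R. \<not> adj k j"
  shows "hS n b (insert k R) = h k * hS n b R"
proof -
  have sle: "sorted_list_of_set (insert k R) = insort k (sorted_list_of_set R)"
    using assms by (simp add: sorted_list_of_set_insert)
  show ?thesis unfolding hS_def sle
    using assms h_car h_comm by (intro mprod_insort) auto
qed

lemma hS_sign:
  assumes M: "M \<in> carrier_mat NN NN" and R: "finite R" "R \<subseteq> V"
    and anti: "\<forall>j\<in>R. P j \<longrightarrow> M * h j = - (h j * M)"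
    and com: "\<forall>j\<in>R. \<not> P j \<longrightarrow> M * h j = h j * M"
  shows "M * hS n b R = (-1) ^ card {j\<in>R. P j} \<cdot>\<^sub>m (hS n b R * M)"
proof -
  have "length (filter P (sorted_list_of_set R)) = card {j\<in>R. P j}"
  proof -
    have "{x. P x} \<inter> set (sorted_list_of_set R) = {j\<in>R. P j}" using R by auto
    then show ?thesis by (simp add: distinct_length_filter)
  qed
  moreover have "M * hS n b R = (-1) ^ length (filter P (sorted_list_of_set R)) \<cdot>\<^sub>m (hS n b R * M)"
    unfolding hS_def using assms h_car by (intro mprod_sign) auto
  ultimately show ?thesis by simp
qed

lemma hS_comm:
  assumes "M \<in> carrier_mat NN NN" "finite R" "R \<subseteq> V" "\<forall>j\<in>R. M * h j = h j * M"
  shows "M * hS n b R = hS n b R * M"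
  using hS_sign[of M R "\<lambda>_. False"] assms by (simp add: sone)

lemma hS_anti1:
  assumes "M \<in> carrier_mat NN NN" "finite R" "R \<subseteq> V"
    and "\<forall>j\<in>R. P j \<longrightarrow> M * h j = - (h j * M)"
    and "\<forall>j\<in>R. \<not> P j \<longrightarrow> M * h j = h j * M" and "card {j\<in>R. P j} = 1"
  shows "M * hS n b R = - (hS n b R * M)"
  using hS_sign[of M R P] assms by (simp add: neg_smult_mat)

definition "II = {S. S \<subseteq> V \<and> is_indep adj S}"
definition "I0 = {S \<in> II. S \<inter> K = {}}"
definition "Ik k = {S \<in> II. k \<in> S}"
definition "J k = {R \<in> I0. \<forall>j\<in>R. \<not> adj k j}"
definition "C k k' = {R \<in> I0. \<forall>j\<in>R. \<not> adj k j \<and> \<not> adj k' j}"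
definition "fS S = u ^ card S \<cdot>\<^sub>m hS n b S"

lemma finII: "finite II"
  using finV unfolding II_def by (rule finite_subset[rotated, OF finite_Pow_iff[THEN iffD2]]) auto

lemma II_sub: "S \<in> II \<Longrightarrow> S \<subseteq> V \<and> finite S"
  using finV by (auto simp: II_def intro: finite_subset)

lemma I0_sub: "S \<in> I0 \<Longrightarrow> S \<subseteq> V \<and> finite S"
  using II_sub by (auto simp: I0_def)

lemma fS_car: "S \<subseteq> V \<Longrightarrow> finite S \<Longrightarrow> fS S \<in> carrier_mat NN NN"
  unfolding fS_def using hS_car by simp

lemma fS_car': "S \<in> I0 \<Longrightarrow> fS S \<in> carrier_mat NN NN"
  using I0_sub fS_car by blast

lemma fS_comm:
  assumes "M \<in> carrier_mat NN NN" "R \<in> I0" "\<forall>j\<in>R. M * h j = h j * M"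
  shows "M * fS R = fS R * M"
  using assms hS_comm[of M R] I0_sub[of R] hS_car[of R] by (simp add: fS_def slN srN)

lemma fS_anti1:
  assumes "M \<in> carrier_mat NN NN" "R \<in> I0"
    and "\<forall>j\<in>R. P j \<longrightarrow> M * h j = - (h j * M)"
    and "\<forall>j\<in>R. \<not> P j \<longrightarrow> M * h j = h j * M" and "card {j\<in>R. P j} = 1"
  shows "M * fS R = - (fS R * M)"
  using assms hS_anti1[of M R P] I0_sub[of R] hS_car[of R] by (simp add: fS_def slN srN suN)

lemma indep_K: assumes a: "S \<in> II" "k \<in> S" "k' \<in> S" "k \<in> K" "k' \<in> K" shows "k = k'"
proof (rule ccontr)
  assume "k \<noteq> k'"
  with a have "adj k k'" using Kcl by (auto simp: is_clique_def)
  then show False using a \<open>k \<noteq> k'\<close> unfolding II_def is_indep_def by blast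
qed

lemma simpl1:
  assumes "R \<in> I0" "k \<in> K" "j1 \<in> R" "j2 \<in> R" "adj k j1" "adj k j2"
  shows "j1 = j2"
proof (rule ccontr)
  assume ne: "j1 \<noteq> j2"
  have "j1 \<in> nbhd V adj k - K" "j2 \<in> nbhd V adj k - K"
    using assms by (auto simp: nbhd_def I0_def II_def)
  moreover have "is_clique adj (nbhd V adj k - K)" using sc assms by (auto simp: simplicial_clique_def)
  ultimately have "adj j1 j2" using ne by (auto simp: is_clique_def)
  then show False using assms ne by (auto simp: I0_def II_def is_indep_def)
qed

lemma card_one:
  assumes "R \<in> I0" "k \<in> K" "R \<notin> J k"
  shows "card {j\<in>R. adj k j} = 1"
proof -
  obtain j0 where j0: "j0 \<in> R" "adj k j0" using assms by (auto simp: J_def)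
  have "{j\<in>R. adj k j} = {j0}" using simpl1[OF assms(1,2)] j0 by auto
  then show ?thesis by simp
qed


lemma J_sub: "J k \<subseteq> I0" and C_sub: "C k k' \<subseteq> J k" and C_sym: "C k k' = C k' k"
  by (auto simp: J_def C_def)

lemma finI0: "finite I0" using finII by (auto simp: I0_def intro: finite_subset)
lemma finJ: "finite (J k)" using finI0 J_sub finite_subset by blast
lemma finIk: "finite (Ik k)" using finII by (auto simp: Ik_def intro: finite_subset)

lemma Ik_img: assumes k: "k \<in> K" shows "Ik k = insert k ` J k"
proof
  show "Ik k \<subseteq> insert k ` J k"
  proof
    fix S assume S: "S \<in> Ik k"
    then have SII: "S \<in> II" and kS: "k \<in> S" by (auto simp: Ik_def)
    have "S - {k} \<in> J k"
    proof -
      have "S - {k} \<in> II" using SII by (auto simp: II_def is_indep_def)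
      moreover have "(S - {k}) \<inter> K = {}" using indep_K[OF SII kS _ k] by auto
      moreover have "\<forall>j\<in>S - {k}. \<not> adj k j" using SII kS by (auto simp: II_def is_indep_def)
      ultimately show ?thesis by (auto simp: J_def I0_def)
    qed
    moreover have "S = insert k (S - {k})" using kS by auto
    ultimately show "S \<in> insert k ` J k" by blast
  qed
next
  show "insert k ` J k \<subseteq> Ik k"
  proof
    fix S assume "S \<in> insert k ` J k"
    then obtain R where R: "R \<in> J k" and S: "S = insert k R" by auto
    have RV: "R \<subseteq> V" and Rind: "is_indep adj R" and nadj: "\<forall>j\<in>R. \<not> adj k j"
      using R by (auto simp: J_def I0_def II_def)
    have kV: "k \<in> V" using k KV by auto
    have nadj2: "\<forall>j\<in>R. \<not> adj j k" using nadj adj_sym RV kV by blast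
    have "is_indep adj (insert k R)"
      using Rind nadj nadj2 unfolding is_indep_def by blast
    then show "S \<in> Ik k" using S RV kV by (auto simp: Ik_def II_def)
  qed
qed

lemma inj_ins: "k \<in> K \<Longrightarrow> inj_on (insert k) (J k)"
proof (rule inj_onI)
  fix R1 R2 assume "k \<in> K" "R1 \<in> J k" "R2 \<in> J k" "insert k R1 = insert k R2"
  moreover have "k \<notin> R1" "k \<notin> R2" using \<open>k \<in> K\<close> \<open>R1 \<in> J k\<close> \<open>R2 \<in> J k\<close> by (auto simp: J_def I0_def)
  ultimately show "R1 = R2" by (metis insert_ident)
qed

lemma fS_insert:
  assumes k: "k \<in> K" and R: "R \<in> J k"
  shows "fS (insert k R) = u \<cdot>\<^sub>m (h k * fS R)"
proof -
  have RV: "R \<subseteq> V" "finite R" using R J_sub I0_sub by blast+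
  have kR: "k \<notin> R" using k R by (auto simp: J_def I0_def)
  have kV: "k \<in> V" using k KV by auto
  have nadj: "\<forall>j\<in>R. \<not> adj k j" using R by (auto simp: J_def)
  have "fS (insert k R) = u ^ Suc (card R) \<cdot>\<^sub>m (h k * hS n b R)"
    using hS_insert[OF RV(2) RV(1) kV kR nadj] RV kR by (simp add: fS_def)
  also have "\<dots> = u \<cdot>\<^sub>m (h k * fS R)"
    unfolding fS_def using h_car[OF kV] hS_car[OF RV] by (simp add: srN smult_smult_mat)
  finally show ?thesis .
qed

definition "A0 = msum NN fS I0"
definition "B k = msum NN fS (J k)"
definition "Bs = msum NN (\<lambda>k. h k * B k) K"
definition "hK = msum NN h K"

lemma B_car: "B k \<in> carrier_mat NN NN" by (simp add: B_def)
lemma hk_car: "k \<in> K \<Longrightarrow> h k \<in> carrier_mat NN NN" using h_car KV by auto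
lemma hB_car: "k \<in> K \<Longrightarrow> h k * B k \<in> carrier_mat NN NN" using hk_car B_car mcN by blast

lemma T_dec: "msum NN fS II = A0 + u \<cdot>\<^sub>m Bs"
proof -
  have Ieq: "II = I0 \<union> (\<Union>k\<in>K. Ik k)"
    by (auto simp: I0_def Ik_def)
  have disj: "I0 \<inter> (\<Union>k\<in>K. Ik k) = {}" by (auto simp: I0_def Ik_def)
  have disj2: "\<And>k k'. k \<in> K \<Longrightarrow> k' \<in> K \<Longrightarrow> k \<noteq> k' \<Longrightarrow> Ik k \<inter> Ik k' = {}"
    using indep_K by (auto simp: Ik_def)
  have "msum NN fS II = A0 + msum NN fS (\<Union>k\<in>K. Ik k)"
    unfolding A0_def Ieq using finI0 finIk finK disj by (intro msum_union) auto
  also have "msum NN fS (\<Union>k\<in>K. Ik k) = msum NN (\<lambda>k. msum NN fS (Ik k)) K"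
    using finK finIk disj2 by (intro msum_UN) auto
  also have "\<dots> = msum NN (\<lambda>k. u \<cdot>\<^sub>m (h k * B k)) K"
  proof (rule msum_cong)
    fix k assume k: "k \<in> K"
    have kV: "k \<in> V" using k KV by auto
    have "msum NN fS (Ik k) = msum NN (\<lambda>R. fS (insert k R)) (J k)"
      unfolding Ik_img[OF k] using inj_ins[OF k] by (rule msum_image)
    also have "\<dots> = msum NN (\<lambda>R. u \<cdot>\<^sub>m (h k * fS R)) (J k)"
      using fS_insert[OF k] by (intro msum_cong) auto
    also have "\<dots> = u \<cdot>\<^sub>m (h k * B k)"
      unfolding B_def using h_car[OF kV] fS_car' J_sub
      by (subst msum_smult, force, subst msum_mult_left, auto)
    finally show "msum NN fS (Ik k) = u \<cdot>\<^sub>m (h k * B k)" .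
  qed
  also have "\<dots> = u \<cdot>\<^sub>m Bs"
    unfolding Bs_def by (intro msum_smult hB_car)
  finally show ?thesis .
qed


lemma r_inv: "M \<in> carrier_mat NN NN \<Longrightarrow> M + - M = (0\<^sub>m NN NN :: complex mat)"
  by (rule eq_matI) auto

lemma neg_l: "P \<in> carrier_mat NN NN \<Longrightarrow> Q \<in> carrier_mat NN NN \<Longrightarrow> (- P) * Q = - (P * (Q :: complex mat))"
  by (rule uminus_mult_left_mat) auto
lemma neg_r: "P \<in> carrier_mat NN NN \<Longrightarrow> Q \<in> carrier_mat NN NN \<Longrightarrow> P * (- Q) = - (P * (Q :: complex mat))"
  by (rule uminus_mult_right_mat) auto

lemma chi_msum: assumes "X \<subseteq> I0" shows "chi * msum NN fS X = msum NN fS X * chi"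
proof -
  have "chi * msum NN fS X = msum NN (\<lambda>R. chi * fS R) X"
    using chi_car fS_car' assms by (intro msum_mult_left[symmetric]) auto
  also have "\<dots> = msum NN (\<lambda>R. fS R * chi) X"
  proof (rule msum_cong)
    fix R assume "R \<in> X"
    then have R: "R \<in> I0" using assms by auto
    then have "\<forall>j\<in>R. chi * h j = h j * chi" using chi_comm I0_sub by (auto simp: I0_def)
    then show "chi * fS R = fS R * chi" using fS_comm[OF chi_car R] by simp
  qed
  also have "\<dots> = msum NN fS X * chi"
    using chi_car fS_car' assms by (intro msum_mult_right) auto
  finally show ?thesis .
qed

lemma XA: "chi * A0 = A0 * chi" unfolding A0_def by (rule chi_msum) simp

lemma XB: "chi * Bs = - (Bs * chi)"
proof -
  have "chi * Bs = msum NN (\<lambda>k. chi * (h k * B k)) K"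
    unfolding Bs_def using chi_car hB_car by (intro msum_mult_left[symmetric]) auto
  also have "\<dots> = msum NN (\<lambda>k. - (h k * B k * chi)) K"
  proof (rule msum_cong)
    fix k assume k: "k \<in> K"
    have "chi * (h k * B k) = (chi * h k) * B k" using chi_car hk_car[OF k] B_car by (simp add: asN)
    also have "\<dots> = - (h k * (chi * B k))" using chi_anti[OF k] chi_car hk_car[OF k] B_car by (simp add: asN neg_l mcN)
    also have "chi * B k = B k * chi" unfolding B_def by (rule chi_msum) (rule J_sub)
    also have "- (h k * (B k * chi)) = - (h k * B k * chi)" using chi_car hk_car[OF k] B_car by (simp add: asN)
    finally show "chi * (h k * B k) = - (h k * B k * chi)" .
  qed
  also have "\<dots> = - msum NN (\<lambda>k. h k * B k * chi) K"
    using hB_car chi_car by (intro msum_uminus) (simp add: mcN)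
  also have "msum NN (\<lambda>k. h k * B k * chi) K = Bs * chi"
    unfolding Bs_def using hB_car chi_car by (intro msum_mult_right) auto
  finally show ?thesis .
qed

lemma E1k: assumes k: "k \<in> K" shows "h k * A0 + A0 * h k = 2 \<cdot>\<^sub>m (h k * B k)"
proof -
  have kV: "k \<in> V" using k KV by auto
  have hk: "h k \<in> carrier_mat NN NN" using hk_car[OF k] .
  have "h k * A0 + A0 * h k = msum NN (\<lambda>R. h k * fS R) I0 + msum NN (\<lambda>R. fS R * h k) I0"
    unfolding A0_def using hk fS_car' by (simp add: msum_mult_left msum_mult_right)
  also have "\<dots> = msum NN (\<lambda>R. h k * fS R + fS R * h k) I0"
    using hk fS_car' by (intro msum_add[symmetric]) (auto simp: mcN)
  also have "\<dots> = msum NN (\<lambda>R. if R \<in> J k then 2 \<cdot>\<^sub>m (h k * fS R) else 0\<^sub>m NN NN) I0"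
  proof (rule msum_cong)
    fix R assume R: "R \<in> I0"
    have RV: "R \<subseteq> V" using I0_sub[OF R] by simp
    show "h k * fS R + fS R * h k = (if R \<in> J k then 2 \<cdot>\<^sub>m (h k * fS R) else 0\<^sub>m NN NN)"
    proof (cases "R \<in> J k")
      case True
      then have "\<forall>j\<in>R. h k * h j = h j * h k" using h_comm kV RV by (auto simp: J_def)
      then have "fS R * h k = h k * fS R" using fS_comm[OF hk R] by simp
      then show ?thesis using True by (simp add: two_smult)
    next
      case False
      have "h k * fS R = - (fS R * h k)"
        using hk R card_one[OF R k False] h_anti h_comm kV RV by (intro fS_anti1[where P = "adj k"]) auto
      then show ?thesis using False hk fS_car'[OF R] by (simp add: uminus_l_inv_mat[where nr=NN and nc=NN])
    qed
  qed
  also have "\<dots> = msum NN (\<lambda>R. 2 \<cdot>\<^sub>m (h k * fS R)) (J k)"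
    using finI0 J_sub by (rule msum_if_subset)
  also have "\<dots> = 2 \<cdot>\<^sub>m (h k * B k)"
    unfolding B_def using hk fS_car' J_sub
    by (subst msum_smult, force simp: mcN, subst msum_mult_left, auto)
  finally show ?thesis .
qed

lemma A0_car: "A0 \<in> carrier_mat NN NN" by (simp add: A0_def)
lemma hK_car: "hK \<in> carrier_mat NN NN" by (simp add: hK_def)
lemma Bs_car: "Bs \<in> carrier_mat NN NN" by (simp add: Bs_def)

lemma E1: "hK * A0 + A0 * hK = 2 \<cdot>\<^sub>m Bs"
proof -
  have "hK * A0 + A0 * hK = msum NN (\<lambda>k. h k * A0) K + msum NN (\<lambda>k. A0 * h k) K"
    unfolding hK_def using hk_car A0_car by (simp add: msum_mult_left msum_mult_right)
  also have "\<dots> = msum NN (\<lambda>k. h k * A0 + A0 * h k) K"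
    using hk_car A0_car by (intro msum_add[symmetric]) (auto simp: mcN)
  also have "\<dots> = msum NN (\<lambda>k. 2 \<cdot>\<^sub>m (h k * B k)) K"
    using E1k by (rule msum_cong)
  also have "\<dots> = 2 \<cdot>\<^sub>m Bs"
    unfolding Bs_def using hB_car by (rule msum_smult)
  finally show ?thesis .
qed


lemma Bcomm: assumes k: "k \<in> K" shows "B k * h k = h k * B k"
proof -
  have kV: "k \<in> V" using k KV by auto
  have "B k * h k = msum NN (\<lambda>R. fS R * h k) (J k)"
    unfolding B_def using hk_car[OF k] fS_car' J_sub by (intro msum_mult_right[symmetric]) auto
  also have "\<dots> = msum NN (\<lambda>R. h k * fS R) (J k)"
  proof (rule msum_cong)
    fix R assume R: "R \<in> J k"
    then have R0: "R \<in> I0" using J_sub by auto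
    have "\<forall>j\<in>R. h k * h j = h j * h k" using R h_comm kV I0_sub[OF R0] by (auto simp: J_def)
    then show "fS R * h k = h k * fS R" using fS_comm[OF hk_car[OF k] R0] by simp
  qed
  also have "\<dots> = h k * B k"
    unfolding B_def using hk_car[OF k] fS_car' J_sub by (intro msum_mult_left) auto
  finally show ?thesis .
qed

lemma Bsign: assumes k: "k \<in> K" and k': "k' \<in> K"
  shows "B k * h k' = msum NN (\<lambda>R. if R \<in> C k k' then h k' * fS R else - (h k' * fS R)) (J k)"
proof -
  have k'V: "k' \<in> V" using k' KV by auto
  have "B k * h k' = msum NN (\<lambda>R. fS R * h k') (J k)"
    unfolding B_def using hk_car[OF k'] fS_car' J_sub by (intro msum_mult_right[symmetric]) auto
  also have "\<dots> = msum NN (\<lambda>R. if R \<in> C k k' then h k' * fS R else - (h k' * fS R)) (J k)"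
  proof (rule msum_cong)
    fix R assume R: "R \<in> J k"
    then have R0: "R \<in> I0" using J_sub by auto
    have RV: "R \<subseteq> V" using I0_sub[OF R0] by simp
    show "fS R * h k' = (if R \<in> C k k' then h k' * fS R else - (h k' * fS R))"
    proof (cases "R \<in> C k k'")
      case True
      have "\<forall>j\<in>R. h k' * h j = h j * h k'" using True h_comm k'V RV by (auto simp: C_def)
      then show ?thesis using True fS_comm[OF hk_car[OF k'] R0] by simp
    next
      case False
      then have nJ: "R \<notin> J k'" using R by (auto simp: C_def J_def)
      have "h k' * fS R = - (fS R * h k')"
        using hk_car[OF k'] R0 card_one[OF R0 k' nJ] h_anti h_comm k'V RV
        by (intro fS_anti1[where P = "adj k'"]) auto
      then show ?thesis using False by (simp add: uminus_uminus_mat')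
    qed
  qed
  finally show ?thesis .
qed

definition "G k k' = h k' * (h k * B k) - h k * B k * h k'"

lemma G_car: "k \<in> K \<Longrightarrow> k' \<in> K \<Longrightarrow> G k k' \<in> carrier_mat NN NN"
  unfolding G_def using hk_car B_car by (simp add: mcN minus_carrier_mat)

lemma Gform: assumes k: "k \<in> K" and k': "k' \<in> K" and ne: "k \<noteq> k'"
  shows "G k k' = 2 \<cdot>\<^sub>m (h k' * h k * msum NN fS (C k k'))"
proof -
  have hk: "h k \<in> carrier_mat NN NN" and hk': "h k' \<in> carrier_mat NN NN" using hk_car k k' by auto
  have kk: "h k * h k' = - (h k' * h k)"
    using h_anti[of k k'] k k' KV Kcl ne by (auto simp: is_clique_def)
  have fc: "\<And>R. R \<in> J k \<Longrightarrow> fS R \<in> carrier_mat NN NN" using fS_car' J_sub by blast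
  have e1: "h k' * (h k * B k) = msum NN (\<lambda>R. h k' * h k * fS R) (J k)"
  proof -
    have "h k' * (h k * B k) = (h k' * h k) * B k" using hk hk' B_car by (simp add: asN)
    also have "\<dots> = msum NN (\<lambda>R. h k' * h k * fS R) (J k)"
      unfolding B_def using hk hk' fc by (intro msum_mult_left[symmetric]) (auto simp: mcN)
    finally show ?thesis .
  qed
  have e2: "h k * B k * h k' = msum NN (\<lambda>R. h k * (if R \<in> C k k' then h k' * fS R else - (h k' * fS R))) (J k)"
  proof -
    have "h k * B k * h k' = h k * (B k * h k')" using hk hk' B_car by (simp add: asN)
    also have "\<dots> = h k * msum NN (\<lambda>R. if R \<in> C k k' then h k' * fS R else - (h k' * fS R)) (J k)"
      by (simp only: Bsign[OF k k'])
    also have "\<dots> = msum NN (\<lambda>R. h k * (if R \<in> C k k' then h k' * fS R else - (h k' * fS R))) (J k)"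
      using hk hk' fc by (intro msum_mult_left[symmetric]) (auto simp: mcN)
    finally show ?thesis .
  qed
  have "G k k' = msum NN (\<lambda>R. h k' * h k * fS R - h k * (if R \<in> C k k' then h k' * fS R else - (h k' * fS R))) (J k)"
    unfolding G_def e1 e2 using hk hk' fc by (intro msum_diff[symmetric]) (auto simp: mcN)
  also have "\<dots> = msum NN (\<lambda>R. if R \<in> C k k' then 2 \<cdot>\<^sub>m (h k' * h k * fS R) else 0\<^sub>m NN NN) (J k)"
  proof (rule msum_cong)
    fix R assume R: "R \<in> J k"
    have f: "fS R \<in> carrier_mat NN NN" using fc R .
    have hh: "h k * (h k' * fS R) = - (h k' * h k * fS R)"
    proof -
      have "h k * (h k' * fS R) = (h k * h k') * fS R" using hk hk' f by (intro asN[symmetric])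
      also have "\<dots> = (- (h k' * h k)) * fS R" by (simp only: kk)
      also have "\<dots> = - (h k' * h k * fS R)" using hk hk' f by (intro neg_l mcN)
      finally show ?thesis .
    qed
    show "h k' * h k * fS R - h k * (if R \<in> C k k' then h k' * fS R else - (h k' * fS R)) =
        (if R \<in> C k k' then 2 \<cdot>\<^sub>m (h k' * h k * fS R) else 0\<^sub>m NN NN)"
    proof (cases "R \<in> C k k'")
      case True
      then show ?thesis using hh hk hk' f
        by (simp add: minus_add_uminus_mat[where nr=NN and nc=NN] uminus_uminus_mat' two_smult mcN)
    next
      case False
      have "h k * - (h k' * fS R) = h k' * h k * fS R" using hh hk hk' f
        by (simp add: neg_r mcN uminus_uminus_mat')
      then show ?thesis using False hk hk' f
        by (simp add: minus_add_uminus_mat[where nr=NN and nc=NN] r_inv mcN)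
    qed
  qed
  also have "\<dots> = msum NN (\<lambda>R. 2 \<cdot>\<^sub>m (h k' * h k * fS R)) (C k k')"
    using finJ C_sub by (rule msum_if_subset)
  also have "\<dots> = 2 \<cdot>\<^sub>m (h k' * h k * msum NN fS (C k k'))"
  proof -
    have fcC: "\<And>R. R \<in> C k k' \<Longrightarrow> fS R \<in> carrier_mat NN NN" using C_sub J_sub fS_car' by blast
    have "msum NN (\<lambda>R. 2 \<cdot>\<^sub>m (h k' * h k * fS R)) (C k k') = 2 \<cdot>\<^sub>m msum NN (\<lambda>R. h k' * h k * fS R) (C k k')"
      using hk hk' fcC by (intro msum_smult) (simp add: mcN)
    also have "msum NN (\<lambda>R. h k' * h k * fS R) (C k k') = h k' * h k * msum NN fS (C k k')"
      using hk hk' fcC by (intro msum_mult_left) (simp_all add: mcN)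
    finally show ?thesis .
  qed
  finally show ?thesis .
qed

lemma G_anti: assumes k: "k \<in> K" and k': "k' \<in> K" shows "G k k' = - G k' k"
proof (cases "k = k'")
  case True
  have hk: "h k \<in> carrier_mat NN NN" using hk_car k by auto
  have "G k k = 0\<^sub>m NN NN"
    unfolding G_def using hk B_car Bcomm[OF k] by (simp add: asN mcN minus_r_inv_mat)
  moreover have "- (0\<^sub>m NN NN) = (0\<^sub>m NN NN :: complex mat)" by (rule eq_matI) auto
  ultimately show ?thesis using True by simp
next
  case False
  have hk: "h k \<in> carrier_mat NN NN" and hk': "h k' \<in> carrier_mat NN NN" using hk_car k k' by auto
  have kk: "h k * h k' = - (h k' * h k)"
    using h_anti[of k k'] k k' KV Kcl False by (auto simp: is_clique_def)
  have D: "msum NN fS (C k' k) \<in> carrier_mat NN NN" by simp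
  have "G k' k = 2 \<cdot>\<^sub>m (h k * h k' * msum NN fS (C k k'))"
    using Gform[OF k' k] False C_sym by auto
  also have "\<dots> = - (2 \<cdot>\<^sub>m (h k' * h k * msum NN fS (C k k')))"
    unfolding kk using hk hk' by (simp add: neg_l mcN suN)
  finally show ?thesis using Gform[OF k k' False] hk hk'
    by (simp add: uminus_uminus_mat')
qed


lemma E2: "hK * Bs = Bs * hK"
proof -
  have L: "hK * Bs = msum NN (\<lambda>k'. msum NN (\<lambda>k. h k' * (h k * B k)) K) K"
  proof -
    have "hK * Bs = msum NN (\<lambda>k'. h k' * Bs) K"
      unfolding hK_def using hk_car Bs_car by (intro msum_mult_right[symmetric]) auto
    also have "\<dots> = msum NN (\<lambda>k'. msum NN (\<lambda>k. h k' * (h k * B k)) K) K"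
    proof (rule msum_cong)
      fix k' assume "k' \<in> K"
      then show "h k' * Bs = msum NN (\<lambda>k. h k' * (h k * B k)) K"
        unfolding Bs_def using hk_car hB_car by (intro msum_mult_left[symmetric]) auto
    qed
    finally show ?thesis .
  qed
  have R: "Bs * hK = msum NN (\<lambda>k. msum NN (\<lambda>k'. h k * B k * h k') K) K"
  proof -
    have "Bs * hK = msum NN (\<lambda>k. h k * B k * hK) K"
      unfolding Bs_def using hB_car hK_car by (intro msum_mult_right[symmetric]) auto
    also have "\<dots> = msum NN (\<lambda>k. msum NN (\<lambda>k'. h k * B k * h k') K) K"
    proof (rule msum_cong)
      fix k assume "k \<in> K"
      then show "h k * B k * hK = msum NN (\<lambda>k'. h k * B k * h k') K"
        unfolding hK_def using hk_car hB_car by (intro msum_mult_left[symmetric]) auto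
    qed
    finally show ?thesis .
  qed
  show ?thesis unfolding L R
  proof (rule eq_matI)
    fix i j assume "i < dim_row (msum NN (\<lambda>k. msum NN (\<lambda>k'. h k * B k * h k') K) K)"
      "j < dim_col (msum NN (\<lambda>k. msum NN (\<lambda>k'. h k * B k * h k') K) K)"
    then have ij: "i < NN" "j < NN" by auto
    define P where "P k k' = (h k' * (h k * B k)) $$ (i, j)" for k k'
    define Q where "Q k k' = (h k * B k * h k') $$ (i, j)" for k k'
    define g where "g k k' = G k k' $$ (i, j)" for k k'
    have gPQ: "g k k' = P k k' - Q k k'" if "k \<in> K" "k' \<in> K" for k k'
      using ij hk_car[OF that(1)] hk_car[OF that(2)] B_car
      unfolding g_def P_def Q_def G_def by (simp add: mcN)
    have ganti: "g k k' = - g k' k" if "k \<in> K" "k' \<in> K" for k k'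
      using ij G_anti[OF that] G_car[OF that(2,1)] unfolding g_def by simp
    have s0: "(\<Sum>k\<in>K. \<Sum>k'\<in>K. g k k') = 0"
    proof -
      have "(\<Sum>k\<in>K. \<Sum>k'\<in>K. g k k') = (\<Sum>k\<in>K. \<Sum>k'\<in>K. - g k' k)"
        by (rule sum.cong[OF refl], rule sum.cong[OF refl], rule ganti) auto
      also have "\<dots> = - (\<Sum>k'\<in>K. \<Sum>k\<in>K. g k' k)"
        by (subst sum.swap) (simp add: sum_negf)
      finally show ?thesis by (rule neg_self0)
    qed
    have "msum NN (\<lambda>k'. msum NN (\<lambda>k. h k' * (h k * B k)) K) K $$ (i, j) = (\<Sum>k'\<in>K. \<Sum>k\<in>K. P k k')"
      using ij unfolding P_def by (simp add: msum_entry)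
    also have "\<dots> = (\<Sum>k\<in>K. \<Sum>k'\<in>K. P k k')" by (rule sum.swap)
    also have "\<dots> = (\<Sum>k\<in>K. \<Sum>k'\<in>K. Q k k' + g k k')"
      using gPQ by (intro sum.cong) auto
    also have "\<dots> = (\<Sum>k\<in>K. \<Sum>k'\<in>K. Q k k') + (\<Sum>k\<in>K. \<Sum>k'\<in>K. g k k')"
      by (simp add: sum.distrib)
    also have "\<dots> = msum NN (\<lambda>k. msum NN (\<lambda>k'. h k * B k * h k') K) K $$ (i, j)"
      using ij s0 unfolding Q_def by (simp add: msum_entry)
    finally show "msum NN (\<lambda>k'. msum NN (\<lambda>k. h k' * (h k * B k)) K) K $$ (i, j) =
        msum NN (\<lambda>k. msum NN (\<lambda>k'. h k * B k * h k') K) K $$ (i, j)" .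
  qed auto
qed

lemma TGm: "TG n V b (- u) = msum NN fS II"
  unfolding TG_def fS_def II_def by simp

lemma main: "TG n V b u * (1\<^sub>m NN + u \<cdot>\<^sub>m hK) * chi * TG n V b (- u)
       = ZG_neg_sq n V b u * (1\<^sub>m NN - u \<cdot>\<^sub>m hK) * chi"
  unfolding ZG_neg_sq_def TGm T_dec
  by (rule final_alg[OF A0_car Bs_car hK_car chi_car _ refl XA XB E1 E2]) (simp add: TG_def)

end

theorem lemma12:
  fixes n :: nat and V :: "nat list set" and b :: "nat list \<Rightarrow> real"
    and K :: "nat list set" and jstar :: "nat list" and u :: complex
  assumes "finite V"
    and "\<forall>j\<in>V. is_pauli_string n j"
    and "\<forall>j\<in>V. b j \<noteq> 0"
    and "claw_free V (frust b)"
    and "simplicial_clique V (frust b) K"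
    and "is_pauli_string n jstar" and "jstar \<notin> V"
    and "\<forall>k\<in>V. anticommute (pauli_mat jstar) (hterm b k) \<longleftrightarrow> k \<in> K"
  shows "TG n V b u * (1\<^sub>m (2 ^ n) + u \<cdot>\<^sub>m msum (2 ^ n) (hterm b) K) * pauli_mat jstar * TG n V b (- u)
       = ZG_neg_sq n V b u * (1\<^sub>m (2 ^ n) - u \<cdot>\<^sub>m msum (2 ^ n) (hterm b) K) * pauli_mat jstar"
proof -
  interpret LS n V b K jstar u
    using assms by unfold_locales auto
  show ?thesis using main unfolding hK_def .
qed

end
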